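(* Let $0<e_b<1/3$ and, for $a\in[e_b/2,e_b]$, consider the initial triple $(p_X,p_Y,p_Z)=(e_b-a,\;a,\;\tfrac32 e_b-a)$. Fix any finite sequence of B steps and P steps whose first step is a B step, let $(p_X',p_Y',p_Z')$ be the result of applying it, and let $R(a)=1-H_2(p_X'+p_Y')-H_2(p_Z'+p_Y')$. Then the minimum of $R(a)$ over $a\in[e_b/2,e_b]$ (the worst case) is attained at $a=e_b/2$.
   Context: $H_2(p)=-p\log_2 p-(1-p)\log_2(1-p)$. A B step maps $(p_X,p_Y,p_Z)$ to $p_X'=(p_X^2+p_Y^2)/p_S$, $p_Y'=2p_Xp_Y/p_S$, $p_Z'=2(1-p_X-p_Y-p_Z)p_Z/p_S$ with $p_S=1-2(p_X+p_Y)(1-p_X-p_Y)$. A P step maps $(p_X,p_Y,p_Z)$, with $p_I=1-p_X-p_Y-p_Z$, to $p_X'=3p_I^2(p_X+p_Y)+6p_Ip_Xp_Z+3p_X^2p_Y+p_X^3$, $p_Y'=6p_Ip_Yp_Z+3p_X(p_Y^2+p_Z^2)+3p_Yp_Z^2+p_Y^3$, $p_Z'=3p_I(p_Y^2+p_Z^2)+6p_Xp_Yp_Z+3p_Y^2p_Z+p_Z^3$. This is the single-photon SARG04 case, where $e_b$ is the bit error rate and $a$ the (unknown) $Y$-error rate. *)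

theory Defs
  imports Complex_Main
begin

definition H2 :: "real \<Rightarrow> real" where
  "H2 p = - p * log 2 p - (1 - p) * log 2 (1 - p)"

definition B_step :: "real \<times> real \<times> real \<Rightarrow> real \<times> real \<times> real" where
  "B_step t = (case t of (pX, pY, pZ) \<Rightarrow>
     let pS = 1 - 2 * (pX + pY) * (1 - pX - pY) in
     ((pX^2 + pY^2) / pS, 2 * pX * pY / pS, 2 * (1 - pX - pY - pZ) * pZ / pS))"

definition P_step :: "real \<times> real \<times> real \<Rightarrow> real \<times> real \<times> real" where
  "P_step t = (case t of (pX, pY, pZ) \<Rightarrow>
     let pI = 1 - pX - pY - pZ in
     (3 * pI^2 * (pX + pY) + 6 * pI * pX * pZ + 3 * pX^2 * pY + pX^3,
      6 * pI * pY * pZ + 3 * pX * (pY^2 + pZ^2) + 3 * pY * pZ^2 + pY^3,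
      3 * pI * (pY^2 + pZ^2) + 6 * pX * pY * pZ + 3 * pY^2 * pZ + pZ^3))"

fun apply_steps :: "bool list \<Rightarrow> real \<times> real \<times> real \<Rightarrow> real \<times> real \<times> real" where
  "apply_steps [] t = t"
| "apply_steps (s # ss) t = apply_steps ss (if s then B_step t else P_step t)"

definition rate :: "bool list \<Rightarrow> real \<Rightarrow> real \<Rightarrow> real" where
  "rate ss eb a = (case apply_steps ss (eb - a, a, 3/2 * eb - a) of (pX, pY, pZ) \<Rightarrow>
     1 - H2 (pX + pY) - H2 (pZ + pY))"

end

theory Submission
  imports Defs
begin

definition PY :: "real \<Rightarrow> real \<Rightarrow> real \<Rightarrow> real" where
  "PY s y z = 6*(1-s-z)*y*z + 3*(s-y)*(y^2+z^2) + 3*y*z^2 + y^3"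
definition PZ :: "real \<Rightarrow> real \<Rightarrow> real \<Rightarrow> real" where
  "PZ s y z = 3*(1-s-z)*(y^2+z^2) + 6*(s-y)*y*z + 3*y^2*z + z^3"
definition PS :: "real \<Rightarrow> real" where
  "PS s = 3*(1-s)^2*s + s^3"

lemma P_step_eq:
  "P_step (x,y,z) = (PS (x+y) - PY (x+y) y z, PY (x+y) y z, PZ (x+y) y z)"
  unfolding P_step_def PS_def PY_def PZ_def Let_def
  by (simp add: power2_eq_square power3_eq_cube algebra_simps)

lemma B_step_eq:
  "B_step (x,y,z) = ((x+y)^2/(1-2*(x+y)*(1-(x+y))) - 2*(x+y-y)*y/(1-2*(x+y)*(1-(x+y))),
     2*(x+y-y)*y/(1-2*(x+y)*(1-(x+y))), 2*(1-(x+y)-z)*z/(1-2*(x+y)*(1-(x+y))))"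
  unfolding B_step_def Let_def
  by (simp add: power2_eq_square diff_divide_distrib[symmetric] algebra_simps)

definition valid :: "real \<times> real \<times> real \<Rightarrow> bool" where
  "valid t = (case t of (x,y,z) \<Rightarrow> 0 \<le> y \<and> y \<le> x \<and> 0 < z \<and> 2*z \<le> 1 - x - y)"

definition lle :: "real \<times> real \<times> real \<Rightarrow> real \<times> real \<times> real \<Rightarrow> bool" where
  "lle t1 t2 = (case t1 of (x1,y1,z1) \<Rightarrow> case t2 of (x2,y2,z2) \<Rightarrow>
      x1 + y1 = x2 + y2 \<and> y1 \<le> y2 \<and> z1 \<le> z2)"

lemma prod_nonneg_aux: "0 \<le> a \<Longrightarrow> 0 \<le> b \<Longrightarrow> 0 \<le> (a::real) * b" by simp

lemma PY_mono_y:
  assumes "0 \<le> y1" "y1 \<le> y2" "y2 \<le> s" "0 \<le> z" "z \<le> 1-s"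
  shows "PY s y1 z \<le> PY s y2 z"
proof -
  have e: "PY s y2 z - PY s y1 z = (y2-y1)*(6*(1-s-z)*z + 3*s*(y1+y2) - 2*(y1^2+y1*y2+y2^2))"
    unfolding PY_def by (simp add: power2_eq_square power3_eq_cube algebra_simps)
  have a1: "y1*y1 \<le> s*y1" using assms by (intro mult_right_mono) auto
  have a2: "y2*y2 \<le> s*y2" using assms by (intro mult_right_mono) auto
  have a3: "y1*y2 \<le> s*y1" using assms by (metis mult.commute mult_left_mono order_trans)
  have a4: "y1*y2 \<le> s*y2" using assms by (intro mult_right_mono) auto
  have a5: "0 \<le> (1-s-z)*z" using assms by simp
  have "0 \<le> 6*(1-s-z)*z + 3*s*(y1+y2) - 2*(y1^2+y1*y2+y2^2)"
    using a1 a2 a3 a4 a5 by (simp add: power2_eq_square algebra_simps)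
  then have "0 \<le> PY s y2 z - PY s y1 z" unfolding e using assms by simp
  then show ?thesis by simp
qed

lemma PY_mono_z:
  assumes "0 \<le> y" "y \<le> s" "0 \<le> z1" "z1 \<le> z2" "z2 \<le> 1-s"
  shows "PY s y z1 \<le> PY s y z2"
proof -
  have e: "PY s y z2 - PY s y z1 = (z2-z1)*(6*y*(1-s-z1-z2) + 3*s*(z1+z2))"
    unfolding PY_def by (simp add: power2_eq_square power3_eq_cube algebra_simps)
  have "0 \<le> 6*y*(1-s-z1-z2) + 3*s*(z1+z2)"
  proof (cases "0 \<le> 1-s-z1-z2")
    case True then show ?thesis using assms by simp
  next
    case False
    then have "s*(1-s-z1-z2) \<le> y*(1-s-z1-z2)" using assms by (intro mult_right_mono_neg) auto
    moreover have "0 \<le> s*(2*(1-s) - z1 - z2)" using assms by simp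
    ultimately show ?thesis by (simp add: algebra_simps)
  qed
  then have "0 \<le> PY s y z2 - PY s y z1" unfolding e using assms by simp
  then show ?thesis by simp
qed

lemma PZ_mono_y:
  assumes "0 \<le> y1" "y1 \<le> y2" "y2 \<le> s" "0 \<le> z" "z \<le> 1-s"
  shows "PZ s y1 z \<le> PZ s y2 z"
proof -
  have e: "PZ s y2 z - PZ s y1 z = (y2-y1)*(3*(1-s-2*z)*(y1+y2) + 6*s*z)"
    unfolding PZ_def by (simp add: power2_eq_square power3_eq_cube algebra_simps)
  have "0 \<le> 3*(1-s-2*z)*(y1+y2) + 6*s*z"
  proof (cases "0 \<le> 1-s-2*z")
    case True then show ?thesis using assms by simp
  next
    case False
    then have "(1-s-2*z)*(2*s) \<le> (1-s-2*z)*(y1+y2)" using assms by (intro mult_left_mono_neg) auto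
    moreover have "0 \<le> s*(1-s-z)" using assms by simp
    ultimately show ?thesis by (simp add: algebra_simps)
  qed
  then have "0 \<le> PZ s y2 z - PZ s y1 z" unfolding e using assms by simp
  then show ?thesis by simp
qed

lemma PZ_mono_z:
  assumes "0 \<le> y" "y \<le> s" "0 \<le> z1" "z1 \<le> z2" "z2 \<le> 1-s"
  shows "PZ s y z1 \<le> PZ s y z2"
proof -
  have e: "PZ s y z2 - PZ s y z1 = (z2-z1)*(3*(1-s)*(z1+z2) - 2*(z1^2+z1*z2+z2^2) + 6*(s-y)*y)"
    unfolding PZ_def by (simp add: power2_eq_square power3_eq_cube algebra_simps)
  have a1: "z1*z1 \<le> (1-s)*z1" using assms by (intro mult_right_mono) auto
  have a2: "z2*z2 \<le> (1-s)*z2" using assms by (intro mult_right_mono) auto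
  have a3: "z1*z2 \<le> (1-s)*z1" using assms by (metis mult.commute mult_left_mono order_trans)
  have a4: "z1*z2 \<le> (1-s)*z2" using assms by (intro mult_right_mono) auto
  have a5: "0 \<le> (s-y)*y" using assms by simp
  have "0 \<le> 3*(1-s)*(z1+z2) - 2*(z1^2+z1*z2+z2^2) + 6*(s-y)*y"
    using a1 a2 a3 a4 a5 by (simp add: power2_eq_square algebra_simps)
  then have "0 \<le> PZ s y z2 - PZ s y z1" unfolding e using assms by simp
  then show ?thesis by simp
qed

lemma PY_mono:
  assumes "0 \<le> y1" "y1 \<le> y2" "y2 \<le> s" "0 \<le> z1" "z1 \<le> z2" "z2 \<le> 1-s"
  shows "PY s y1 z1 \<le> PY s y2 z2"
  using PY_mono_y[of y1 y2 s z1] PY_mono_z[of y2 s z1 z2] assms by force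

lemma PZ_mono:
  assumes "0 \<le> y1" "y1 \<le> y2" "y2 \<le> s" "0 \<le> z1" "z1 \<le> z2" "z2 \<le> 1-s"
  shows "PZ s y1 z1 \<le> PZ s y2 z2"
  using PZ_mono_y[of y1 y2 s z1] PZ_mono_z[of y2 s z1 z2] assms by force

lemma PY_top: "2 * PY s (s/2) ((1-s)/2) = PS s"
  unfolding PY_def PS_def by (simp add: power2_eq_square power3_eq_cube field_simps)

lemma PZ_top: "2 * PZ s (s/2) ((1-s)/2) = 1 - PS s"
  unfolding PZ_def PS_def by (simp add: power2_eq_square power3_eq_cube field_simps)


lemma P_valid:
  assumes "valid (x,y,z)"
  shows "valid (P_step (x,y,z))"
proof -
  define s where "s = x+y"
  have h: "0 \<le> y" "2*y \<le> s" "0 < z" "2*z \<le> 1 - s" using assms unfolding valid_def s_def by auto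
  have s0: "0 \<le> s" "s < 1" using h by auto
  have "PY s 0 0 \<le> PY s y z" using h s0 by (intro PY_mono) auto
  then have y0: "0 \<le> PY s y z" unfolding PY_def by simp
  have "PY s y z \<le> PY s (s/2) ((1-s)/2)" using h s0 by (intro PY_mono) auto
  then have y1: "2 * PY s y z \<le> PS s" using PY_top[of s] by linarith
  have "PZ s 0 z \<le> PZ s y z" using h s0 by (intro PZ_mono) auto
  moreover have "0 < PZ s 0 z" unfolding PZ_def using h s0
    by (simp add: add_nonneg_pos)
  ultimately have z0: "0 < PZ s y z" by linarith
  have "PZ s y z \<le> PZ s (s/2) ((1-s)/2)" using h s0 by (intro PZ_mono) auto
  then have z1: "2 * PZ s y z \<le> 1 - PS s" using PZ_top[of s] by linarith
  show ?thesis unfolding P_step_eq s_def[symmetric] valid_def using y0 y1 z0 z1 by simp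
qed

lemma P_lle:
  assumes "valid (x1,y1,z1)" "valid (x2,y2,z2)" "lle (x1,y1,z1) (x2,y2,z2)"
  shows "lle (P_step (x1,y1,z1)) (P_step (x2,y2,z2))"
proof -
  define s where "s = x1+y1"
  have s2: "x2 + y2 = s" using assms(3) unfolding lle_def s_def by simp
  have h: "0 \<le> y1" "y1 \<le> y2" "2*y2 \<le> s" "0 \<le> z1" "z1 \<le> z2" "2*z2 \<le> 1 - s"
    using assms s2 unfolding valid_def lle_def s_def by auto
  have "PY s y1 z1 \<le> PY s y2 z2" using h by (intro PY_mono) auto
  moreover have "PZ s y1 z1 \<le> PZ s y2 z2" using h by (intro PZ_mono) auto
  ultimately show ?thesis unfolding P_step_eq lle_def s_def[symmetric] s2 by simp
qed

lemma B_step_eq2: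
  assumes "x + y = s"
  shows "B_step (x,y,z) = (s^2/(1-2*s*(1-s)) - 2*x*y/(1-2*s*(1-s)),
     2*x*y/(1-2*s*(1-s)), 2*(1-s-z)*z/(1-2*s*(1-s)))"
  unfolding assms[symmetric] B_step_eq by simp

lemma pS_pos: "0 < 1 - 2*s*(1-s::real)"
proof -
  have "1 - 2*s*(1-s) = s^2 + (1-s)^2" by (simp add: power2_eq_square algebra_simps)
  moreover have "0 < s^2 + (1-s)^2"
  proof (cases "s = 0")
    case True then show ?thesis by simp
  next
    case False then have "0 < s^2" by simp
    then show ?thesis by (simp add: add_pos_nonneg)
  qed
  ultimately show ?thesis by simp
qed

lemma B_valid_gen:
  assumes "0 \<le> x" "0 \<le> y" "0 < z" "z < 1 - x - y"
  shows "valid (B_step (x,y,z))"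
proof -
  define s where "s = x+y"
  define p where "p = 1-2*s*(1-s)"
  have p: "0 < p" unfolding p_def by (rule pS_pos)
  have c1: "0 \<le> 2*x*y/p" using assms p by simp
  have "4*x*y \<le> s^2"
  proof -
    have "0 \<le> (x-y)^2" by simp
    then show ?thesis unfolding s_def by (simp add: power2_eq_square algebra_simps)
  qed
  then have c2: "2*x*y/p \<le> s^2/p - 2*x*y/p" using p by (simp add: diff_divide_distrib[symmetric] divide_right_mono)
  have c3: "0 < 2*(1-s-z)*z/p" using assms p unfolding s_def by simp
  have "4*((1-s-z)*z) \<le> (1-s)^2"
  proof -
    have "0 \<le> (1-s-2*z)^2" by simp
    then show ?thesis by (simp add: power2_eq_square algebra_simps)
  qed
  moreover have "1 - s^2/p = (1-s)^2/p"
  proof -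
    have e: "(1-s)^2 = p - s^2" unfolding p_def by (simp add: power2_eq_square algebra_simps)
    have "1 - s^2/p = (p - s^2)/p" using p by (simp add: diff_divide_distrib)
    then show ?thesis using e by simp
  qed
  ultimately have "4*((1-s-z)*z)/p \<le> 1 - s^2/p"
    using p by (simp add: divide_right_mono)
  moreover have "2*(2*(1-s-z)*z/p) = 4*((1-s-z)*z)/p" using p by (simp add: field_simps)
  ultimately have c4: "2*(2*(1-s-z)*z/p) \<le> 1 - (s^2/p - 2*x*y/p) - 2*x*y/p"
    by linarith
  show ?thesis unfolding B_step_eq2[OF s_def[symmetric]] p_def[symmetric] valid_def
    using c1 c2 c3 c4 by simp
qed

lemma B_valid:
  assumes "valid (x,y,z)"
  shows "valid (B_step (x,y,z))"
proof -
  have "0 \<le> x" "0 \<le> y" "0 < z" "z < 1 - x - y" using assms unfolding valid_def by auto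
  then show ?thesis by (rule B_valid_gen)
qed

lemma B_lle:
  assumes "valid (x1,y1,z1)" "valid (x2,y2,z2)" "lle (x1,y1,z1) (x2,y2,z2)"
  shows "lle (B_step (x1,y1,z1)) (B_step (x2,y2,z2))"
proof -
  define s where "s = x1+y1"
  define p where "p = 1-2*s*(1-s)"
  have p: "0 < p" unfolding p_def by (rule pS_pos)
  have s2: "x2 + y2 = s" using assms(3) unfolding lle_def s_def by simp
  have h: "0 \<le> y1" "y1 \<le> y2" "2*y2 \<le> s" "0 \<le> z1" "z1 \<le> z2" "2*z2 \<le> 1 - s"
    using assms s2 unfolding valid_def lle_def s_def by auto
  have x1: "x1 = s - y1" and x2: "x2 = s - y2" using s2 s_def by auto
  have "(s-y2)*y2 - (s-y1)*y1 = (y2-y1)*(s-y1-y2)" by (simp add: algebra_simps)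
  moreover have "0 \<le> (y2-y1)*(s-y1-y2)" using h by simp
  ultimately have "(s-y1)*y1 \<le> (s-y2)*y2" by linarith
  then have "2*((s-y1)*y1) \<le> 2*((s-y2)*y2)" by linarith
  then have a: "2*x1*y1 \<le> 2*x2*y2" unfolding x1 x2 by (simp only: mult.assoc)
  have "(1-s-z2)*z2 - (1-s-z1)*z1 = (z2-z1)*(1-s-z1-z2)" by (simp add: algebra_simps)
  moreover have "0 \<le> (z2-z1)*(1-s-z1-z2)" using h by simp
  ultimately have "(1-s-z1)*z1 \<le> (1-s-z2)*z2" by linarith
  then have "2*((1-s-z1)*z1) \<le> 2*((1-s-z2)*z2)" by linarith
  then have b: "2*(1-s-z1)*z1 \<le> 2*(1-s-z2)*z2" by (simp only: mult.assoc)
  show ?thesis unfolding B_step_eq2[OF s_def[symmetric]] B_step_eq2[OF s2] p_def[symmetric] lle_def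
    using a b p by (simp add: divide_right_mono)
qed

lemma steps_lle:
  "valid t1 \<Longrightarrow> valid t2 \<Longrightarrow> lle t1 t2 \<Longrightarrow>
   valid (apply_steps ss t1) \<and> valid (apply_steps ss t2) \<and> lle (apply_steps ss t1) (apply_steps ss t2)"
proof (induction ss arbitrary: t1 t2)
  case Nil
  then show ?case by simp
next
  case (Cons b ss)
  obtain x1 y1 z1 where t1: "t1 = (x1,y1,z1)" by (cases t1) auto
  obtain x2 y2 z2 where t2: "t2 = (x2,y2,z2)" by (cases t2) auto
  define T1 where "T1 = (if b then B_step t1 else P_step t1)"
  define T2 where "T2 = (if b then B_step t2 else P_step t2)"
  have "valid T1 \<and> valid T2 \<and> lle T1 T2"
  proof (cases b)
    case True then show ?thesis using Cons.prems unfolding t1 t2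
      using B_valid[of x1 y1 z1] B_valid[of x2 y2 z2] B_lle[of x1 y1 z1 x2 y2 z2] by (simp add: T1_def T2_def t1 t2)
  next
    case False then show ?thesis using Cons.prems unfolding t1 t2
      using P_valid[of x1 y1 z1] P_valid[of x2 y2 z2] P_lle[of x1 y1 z1 x2 y2 z2] by (simp add: T1_def T2_def t1 t2)
  qed
  then have "valid (apply_steps ss T1) \<and> valid (apply_steps ss T2) \<and> lle (apply_steps ss T1) (apply_steps ss T2)"
    using Cons.IH by blast
  then show ?case unfolding T1_def T2_def by simp
qed


lemma H2_deriv:
  assumes "0 < x" "x < 1"
  shows "(H2 has_real_derivative (log 2 (1-x) - log 2 x)) (at x)"
proof -
  have "((\<lambda>x. - x * log 2 x - (1-x) * log 2 (1-x)) has_real_derivative (log 2 (1-x) - log 2 x)) (at x)"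
    using assms apply (auto intro!: derivative_eq_intros)
    done
  moreover have "H2 = (\<lambda>x. - x * log 2 x - (1-x) * log 2 (1-x))" by (rule ext) (simp add: H2_def)
  ultimately show ?thesis by simp
qed

lemma H2_mono:
  assumes "0 < p" "p \<le> q" "q \<le> 1/2"
  shows "H2 p \<le> H2 q"
proof (rule DERIV_nonneg_imp_increasing_open[OF assms(2)])
  fix x assume x: "p < x" "x < q"
  have "log 2 x \<le> log 2 (1-x)" using x assms by simp
  then show "\<exists>y. (H2 has_real_derivative y) (at x) \<and> 0 \<le> y"
    using H2_deriv[of x] x assms by (intro exI[of _ "log 2 (1-x) - log 2 x"]) auto
next
  have "\<forall>x\<in>{p..q}. isCont H2 x"
    using assms by (auto intro!: DERIV_isCont[OF H2_deriv])
  then show "continuous_on {p..q} H2" by (rule continuous_at_imp_continuous_on)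
qed

lemma rate_cmp:
  assumes "valid (x1,y1,z1)" "valid (x2,y2,z2)" "lle (x1,y1,z1) (x2,y2,z2)"
  shows "1 - H2 (x2+y2) - H2 (z2+y2) \<le> 1 - H2 (x1+y1) - H2 (z1+y1)"
proof -
  have h: "x1+y1 = x2+y2" "0 < z1+y1" "z1+y1 \<le> z2+y2" "z2+y2 \<le> 1/2"
    using assms unfolding valid_def lle_def by auto
  then show ?thesis using H2_mono[of "z1+y1" "z2+y2"] by simp
qed

theorem corollary1:
  fixes eb :: real and ss :: "bool list"
  assumes "0 < eb" and "eb < 1/3"
    and "ss \<noteq> []" and "hd ss"
  shows "\<forall>a \<in> {eb/2 .. eb}. rate ss eb (eb/2) \<le> rate ss eb a"
proof
  fix a assume a: "a \<in> {eb/2 .. eb}"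
  obtain ss' where ss: "ss = True # ss'" using assms(3,4) by (cases ss) auto
  define T where "T = (\<lambda>a. B_step (eb-a, a, 3/2*eb-a))"
  have vT: "valid (T b)" if "b \<in> {eb/2 .. eb}" for b
    unfolding T_def using that assms by (intro B_valid_gen) auto
  define p where "p = 1-2*eb*(1-eb)"
  have p: "0 < p" unfolding p_def by (rule pS_pos)
  have Teq: "T b = (eb^2/p - 2*(eb-b)*b/p, 2*(eb-b)*b/p, 2*(1-eb-(3/2*eb-b))*(3/2*eb-b)/p)" for b
    unfolding T_def p_def by (rule B_step_eq2) simp
  have "(eb-a)*a \<le> (eb-eb/2)*(eb/2)"
  proof -
    have "(eb-eb/2)*(eb/2) - (eb-a)*a = (a - eb/2)^2" by (simp add: power2_eq_square algebra_simps)
    then show ?thesis by (smt (verit) zero_le_power2)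
  qed
  then have "2*((eb-a)*a) \<le> 2*((eb-eb/2)*(eb/2))" by linarith
  then have l1: "2*(eb-a)*a/p \<le> 2*(eb-eb/2)*(eb/2)/p" using p
    by (simp only: mult.assoc divide_right_mono)
  have "(1-eb-(3/2*eb-a))*(3/2*eb-a) \<le> (1-eb-(3/2*eb-eb/2))*(3/2*eb-eb/2)"
  proof -
    have "(1-eb-(3/2*eb-eb/2))*(3/2*eb-eb/2) - (1-eb-(3/2*eb-a))*(3/2*eb-a)
        = (a - eb/2)*(1 - 7/2*eb + a)" by (simp add: field_simps)
    moreover have "0 \<le> (a - eb/2)*(1 - 7/2*eb + a)" using a assms by simp
    ultimately show ?thesis by linarith
  qed
  then have "2*((1-eb-(3/2*eb-a))*(3/2*eb-a)) \<le> 2*((1-eb-(3/2*eb-eb/2))*(3/2*eb-eb/2))" by linarith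
  then have l2: "2*(1-eb-(3/2*eb-a))*(3/2*eb-a)/p \<le> 2*(1-eb-(3/2*eb-eb/2))*(3/2*eb-eb/2)/p" using p
    by (simp only: mult.assoc divide_right_mono)
  have lT: "lle (T a) (T (eb/2))" unfolding Teq lle_def using l1 l2 by simp
  have a2: "eb/2 \<in> {eb/2 .. eb}" using assms by simp
  obtain x1 y1 z1 where F1: "apply_steps ss' (T a) = (x1,y1,z1)" by (cases "apply_steps ss' (T a)") auto
  obtain x2 y2 z2 where F2: "apply_steps ss' (T (eb/2)) = (x2,y2,z2)" by (cases "apply_steps ss' (T (eb/2))") auto
  have "valid (x1,y1,z1) \<and> valid (x2,y2,z2) \<and> lle (x1,y1,z1) (x2,y2,z2)"
    using steps_lle[OF vT[OF a] vT[OF a2] lT, of ss'] unfolding F1 F2 .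
  then have "1 - H2 (x2+y2) - H2 (z2+y2) \<le> 1 - H2 (x1+y1) - H2 (z1+y1)"
    using rate_cmp by blast
  moreover have "rate ss eb a = 1 - H2 (x1+y1) - H2 (z1+y1)"
    unfolding rate_def ss using F1 by (simp add: T_def)
  moreover have "rate ss eb (eb/2) = 1 - H2 (x2+y2) - H2 (z2+y2)"
    unfolding rate_def ss using F2 by (simp add: T_def)
  ultimately show "rate ss eb (eb/2) \<le> rate ss eb a" by simp
qed

end
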